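(* In the directed variant of the greedy routing network creation game on any finite point set in any metric space, there is no best response cycle.
   Context: Let $\mathcal P$ be a finite set of $n\ge2$ points (agents) in a metric space with metric $d$. In the directed variant each agent $u$ chooses a strategy $S_u\subseteq\{(u,v):v\in\mathcal P\setminus\{u\}\}$ of directed edges, which it owns. A profile $\mathbf s=(S_u)_u$ induces the directed network $G(\mathbf s)=(\mathcal P,\bigcup_u S_u)$. A greedy routing path from $u$ to $w$ is a directed path $(x_1=u,\dots,x_j=w)$ in $G(\mathbf s)$ with $d(x_i,w)>d(x_{i+1},w)$ for all $i$; $u$ is greedy connected if it has a greedy routing path to every other agent. The cost of $u$ is $c_u(\mathbf s)=|S_u|$ if $u$ is greedy connected and $\infty$ otherwise. A best response of $u$ in $\mathbf s$ is a strategy minimizing $c_u(S'_u,\mathbf s_{-u})$ over all strategies $S'_u$. A best response path is a sequence of profiles $\mathbf s_0,\dots,\mathbf s_k$ where each $\mathbf s_i$ arises from $\mathbf s_{i-1}$ by one agent switching (from a non-best-response strategy) to a best response; a best response cycle is a best response path with $k\ge1$ and $\mathbf s_0=\mathbf s_k$. *)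

theory Defs
  imports Main "HOL-Library.Extended_Nat"
begin

definition is_metric_on :: "'a set \<Rightarrow> ('a \<Rightarrow> 'a \<Rightarrow> real) \<Rightarrow> bool" where
  "is_metric_on P d \<longleftrightarrow>
     (\<forall>x\<in>P. \<forall>y\<in>P. d x y \<ge> 0 \<and> (d x y = 0 \<longleftrightarrow> x = y) \<and> d x y = d y x) \<and>
     (\<forall>x\<in>P. \<forall>y\<in>P. \<forall>z\<in>P. d x z \<le> d x y + d y z)"

definition edges_of :: "'a set \<Rightarrow> 'a \<Rightarrow> ('a \<times> 'a) set" where
  "edges_of P u = (if u \<in> P then {(u, v) | v. v \<in> P \<and> v \<noteq> u} else {})"

definition profile :: "'a set \<Rightarrow> ('a \<Rightarrow> ('a \<times> 'a) set) \<Rightarrow> bool" where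
  "profile P s \<longleftrightarrow> (\<forall>u. s u \<subseteq> edges_of P u)"

definition network_edges :: "'a set \<Rightarrow> ('a \<Rightarrow> ('a \<times> 'a) set) \<Rightarrow> ('a \<times> 'a) set" where
  "network_edges P s = (\<Union>u\<in>P. s u)"

definition greedy_path ::
  "'a set \<Rightarrow> ('a \<Rightarrow> 'a \<Rightarrow> real) \<Rightarrow> ('a \<Rightarrow> ('a \<times> 'a) set) \<Rightarrow> 'a list \<Rightarrow> 'a \<Rightarrow> 'a \<Rightarrow> bool" where
  "greedy_path P d s xs u w \<longleftrightarrow>
     xs \<noteq> [] \<and> hd xs = u \<and> last xs = w \<and>
     (\<forall>i. Suc i < length xs \<longrightarrow>
        (xs ! i, xs ! Suc i) \<in> network_edges P s \<and> d (xs ! i) w > d (xs ! Suc i) w)"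

definition greedy_connected ::
  "'a set \<Rightarrow> ('a \<Rightarrow> 'a \<Rightarrow> real) \<Rightarrow> ('a \<Rightarrow> ('a \<times> 'a) set) \<Rightarrow> 'a \<Rightarrow> bool" where
  "greedy_connected P d s u \<longleftrightarrow> (\<forall>w\<in>P. w \<noteq> u \<longrightarrow> (\<exists>xs. greedy_path P d s xs u w))"

definition cost ::
  "'a set \<Rightarrow> ('a \<Rightarrow> 'a \<Rightarrow> real) \<Rightarrow> ('a \<Rightarrow> ('a \<times> 'a) set) \<Rightarrow> 'a \<Rightarrow> enat" where
  "cost P d s u = (if greedy_connected P d s u then enat (card (s u)) else \<infinity>)"

definition best_response ::
  "'a set \<Rightarrow> ('a \<Rightarrow> 'a \<Rightarrow> real) \<Rightarrow> ('a \<Rightarrow> ('a \<times> 'a) set) \<Rightarrow> 'a \<Rightarrow> ('a \<times> 'a) set \<Rightarrow> bool" where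
  "best_response P d s u S \<longleftrightarrow>
     S \<subseteq> edges_of P u \<and>
     (\<forall>S'. S' \<subseteq> edges_of P u \<longrightarrow> cost P d (s(u := S)) u \<le> cost P d (s(u := S')) u)"

definition br_step ::
  "'a set \<Rightarrow> ('a \<Rightarrow> 'a \<Rightarrow> real) \<Rightarrow> ('a \<Rightarrow> ('a \<times> 'a) set) \<Rightarrow> ('a \<Rightarrow> ('a \<times> 'a) set) \<Rightarrow> bool" where
  "br_step P d s s' \<longleftrightarrow>
     (\<exists>u\<in>P. \<exists>S. \<not> best_response P d s u (s u) \<and> best_response P d s u S \<and> s' = s(u := S))"

definition br_path ::
  "'a set \<Rightarrow> ('a \<Rightarrow> 'a \<Rightarrow> real) \<Rightarrow> ('a \<Rightarrow> ('a \<times> 'a) set) list \<Rightarrow> bool" where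
  "br_path P d ss \<longleftrightarrow> ss \<noteq> [] \<and> (\<forall>s\<in>set ss. profile P s) \<and>
     (\<forall>i. Suc i < length ss \<longrightarrow> br_step P d (ss ! i) (ss ! Suc i))"

definition br_cycle ::
  "'a set \<Rightarrow> ('a \<Rightarrow> 'a \<Rightarrow> real) \<Rightarrow> ('a \<Rightarrow> ('a \<times> 'a) set) list \<Rightarrow> bool" where
  "br_cycle P d ss \<longleftrightarrow> br_path P d ss \<and> length ss \<ge> 2 \<and> hd ss = last ss"

end

theory Submission
  imports Defs
begin

inductive gr :: "'a set \<Rightarrow> ('a \<Rightarrow> 'a \<Rightarrow> real) \<Rightarrow> ('a \<Rightarrow> ('a \<times> 'a) set) \<Rightarrow> 'a \<Rightarrow> 'a \<Rightarrow> bool"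
  for P d s where
  gr_refl: "gr P d s w w"
| gr_step: "(v,x) \<in> network_edges P s \<Longrightarrow> d x w < d v w \<Longrightarrow> gr P d s x w \<Longrightarrow> gr P d s v w"

lemma gp_cons:
  assumes "greedy_path P d s (a # b # ys) v w"
  shows "a = v \<and> (v,b) \<in> network_edges P s \<and> d b w < d v w \<and> greedy_path P d s (b # ys) b w"
proof -
  have A: "\<And>i. Suc i < length (a # b # ys) \<Longrightarrow> ((a # b # ys) ! i, (a # b # ys) ! Suc i) \<in> network_edges P s \<and> d ((a # b # ys) ! Suc i) w < d ((a # b # ys) ! i) w"
    using assms unfolding greedy_path_def by blast
  have av: "a = v" using assms unfolding greedy_path_def by simp
  have lw: "last (b # ys) = w" using assms unfolding greedy_path_def by simp
  have 0: "(v,b) \<in> network_edges P s \<and> d b w < d v w" using A[of 0] av by simp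
  have "\<forall>i. Suc i < length (b # ys) \<longrightarrow> ((b # ys) ! i, (b # ys) ! Suc i) \<in> network_edges P s \<and> d ((b # ys) ! Suc i) w < d ((b # ys) ! i) w"
  proof (intro allI impI)
    fix i assume "Suc i < length (b # ys)"
    then show "((b # ys) ! i, (b # ys) ! Suc i) \<in> network_edges P s \<and> d ((b # ys) ! Suc i) w < d ((b # ys) ! i) w"
      using A[of "Suc i"] by simp
  qed
  then have "greedy_path P d s (b # ys) b w" using lw unfolding greedy_path_def by simp
  then show ?thesis using av 0 by simp
qed

lemma gp_gr: "greedy_path P d s xs v w \<Longrightarrow> gr P d s v w"
proof (induction xs arbitrary: v)
  case Nil
  then show ?case by (simp add: greedy_path_def)
next
  case (Cons a xs)
  show ?case
  proof (cases xs)
    case Nil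
    then have "v = w" using Cons.prems unfolding greedy_path_def by auto
    then show ?thesis by (simp add: gr.intros(1))
  next
    case (Cons b ys)
    have c: "a = v \<and> (v,b) \<in> network_edges P s \<and> d b w < d v w \<and> greedy_path P d s xs b w"
      using gp_cons[of P d s a b ys v w] Cons.prems Cons by simp
    then have "gr P d s b w" using Cons.IH by blast
    then show ?thesis using c gr.intros(2) by metis
  qed
qed

lemma gr_gp: "gr P d s v w \<Longrightarrow> \<exists>xs. greedy_path P d s xs v w"
proof (induction rule: gr.induct)
  case (gr_refl w)
  then show ?case by (rule exI[of _ "[w]"]) (simp add: greedy_path_def)
next
  case (gr_step v x w)
  then obtain xs where xs: "greedy_path P d s xs x w" by blast
  have "\<forall>i. Suc i < length (v # xs) \<longrightarrow> ((v # xs) ! i, (v # xs) ! Suc i) \<in> network_edges P s \<and> d ((v # xs) ! Suc i) w < d ((v # xs) ! i) w"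
  proof (intro allI impI)
    fix i assume i: "Suc i < length (v # xs)"
    show "((v # xs) ! i, (v # xs) ! Suc i) \<in> network_edges P s \<and> d ((v # xs) ! Suc i) w < d ((v # xs) ! i) w"
    proof (cases i)
      case 0
      then show ?thesis using xs gr_step by (cases xs) (auto simp: greedy_path_def)
    next
      case (Suc k)
      then show ?thesis using xs i by (auto simp: greedy_path_def)
    qed
  qed
  then have "greedy_path P d s (v # xs) v w" using xs unfolding greedy_path_def by (cases xs) auto
  then show ?case by blast
qed
lemma gc_gr: "greedy_connected P d s u \<longleftrightarrow> (\<forall>w\<in>P. w \<noteq> u \<longrightarrow> gr P d s u w)"
  unfolding greedy_connected_def using gp_gr gr_gp by metis

lemma ne_src:
  assumes "profile P s" "(a,b) \<in> network_edges P s"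
  shows "a \<in> P \<and> (a,b) \<in> s a"
proof -
  obtain y where y: "y \<in> P" "(a,b) \<in> s y" using assms(2) by (auto simp: network_edges_def)
  then have "(a,b) \<in> edges_of P y" using assms(1) by (auto simp: profile_def)
  then have "a = y" using y by (auto simp: edges_of_def split: if_splits)
  then show ?thesis using y by simp
qed

lemma ne_tgt:
  assumes "profile P s" "(a,b) \<in> network_edges P s"
  shows "b \<in> P"
proof -
  obtain y where y: "y \<in> P" "(a,b) \<in> s y" using assms(2) by (auto simp: network_edges_def)
  then have "(a,b) \<in> edges_of P y" using assms(1) by (auto simp: profile_def)
  then show ?thesis using y by (auto simp: edges_of_def split: if_splits)
qed

lemma gr_in_P: "gr P d s v w \<Longrightarrow> profile P s \<Longrightarrow> v \<in> P \<Longrightarrow> w \<in> P"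
proof (induction rule: gr.induct)
  case (gr_refl w)
  then show ?case by simp
next
  case (gr_step v x w)
  then show ?case using ne_tgt[OF gr_step(5) gr_step(1)] by simp
qed

lemma ne_in: "a \<in> P \<Longrightarrow> (a,b) \<in> s a \<Longrightarrow> (a,b) \<in> network_edges P s"
  by (auto simp: network_edges_def)

lemma gr_transfer:
  assumes "gr P d s v w" "profile P s" "\<forall>x. x \<noteq> u \<longrightarrow> t x = s x" "d v w < d u w"
  shows "gr P d t v w"
  using assms
proof (induction rule: gr.induct)
  case (gr_refl w)
  show ?case by (rule gr.intros(1))
next
  case (gr_step v x w)
  have "v \<noteq> u" using gr_step by auto
  have "v \<in> P \<and> (v,x) \<in> s v" using ne_src[OF gr_step(5) gr_step(1)] .
  then have "(v,x) \<in> network_edges P t" using \<open>v \<noteq> u\<close> gr_step(6) ne_in[of v P x t] by simp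
  moreover have "gr P d t x w" using gr_step(4)[OF gr_step(5,6)] gr_step(2,7) by simp
  ultimately show ?case using gr_step(2) gr.intros(2)[of v x P t d w] by blast
qed

lemma profile_upd: "profile P s \<Longrightarrow> S \<subseteq> edges_of P u \<Longrightarrow> profile P (s(u := S))"
  by (auto simp: profile_def)

lemma gr_upd_transfer:
  assumes "gr P d (s(u := S)) u w" "profile P s" "profile P t" "S \<subseteq> edges_of P u" "u \<in> P"
    and eq: "gr P d s = gr P d t"
  shows "gr P d (t(u := S)) u w"
  using assms(1)
proof (cases rule: gr.cases)
  case gr_refl
  then show ?thesis by (simp add: gr.intros(1))
next
  case (gr_step x)
  have "(u,x) \<in> S" using ne_src[OF profile_upd[OF assms(2,4)] gr_step(1)] by simp
  then have e: "(u,x) \<in> network_edges P (t(u := S))" using ne_in[of u P x "t(u:=S)"] assms(5) by simp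
  have "gr P d s x w" using gr_transfer[OF gr_step(3) profile_upd[OF assms(2,4)], where u=u and t=s] gr_step(2) by simp
  then have "gr P d t x w" using eq by simp
  then have "gr P d (t(u:=S)) x w" using gr_transfer[OF _ assms(3), where u=u and t="t(u:=S)"] gr_step(2) by simp
  then show ?thesis using e gr_step(2) gr.intros(2) by metis
qed

lemma cost_eq:
  assumes "profile P s" "profile P t" "S \<subseteq> edges_of P u" "u \<in> P" "gr P d s = gr P d t"
  shows "cost P d (s(u := S)) u = cost P d (t(u := S)) u"
proof -
  have "greedy_connected P d (s(u := S)) u = greedy_connected P d (t(u := S)) u"
    unfolding gc_gr using gr_upd_transfer[OF _ assms(1,2,3,4,5)]
      gr_upd_transfer[OF _ assms(2,1,3,4) assms(5)[symmetric]] by blast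
  then show ?thesis by (simp add: cost_def)
qed

lemma br_eq:
  assumes "profile P s" "profile P t" "u \<in> P" "gr P d s = gr P d t"
  shows "best_response P d s u S = best_response P d t u S"
  unfolding best_response_def using cost_eq[OF assms(1,2) _ assms(3,4)] by auto

lemma br_connected:
  assumes "best_response P d s u S" "u \<in> P" "is_metric_on P d"
  shows "greedy_connected P d (s(u := S)) u"
proof -
  let ?E = "edges_of P u"
  have "greedy_connected P d (s(u := ?E)) u"
    unfolding gc_gr
  proof (intro ballI impI)
    fix w assume w: "w \<in> P" "w \<noteq> u"
    have "(u,w) \<in> network_edges P (s(u := ?E))"
      using w assms(2) by (intro ne_in) (auto simp: edges_of_def)
    moreover have "d w w < d u w" using assms(3) w assms(2)
      unfolding is_metric_on_def by (metis less_eq_real_def)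
    ultimately show "gr P d (s(u := ?E)) u w" using gr.gr_step gr.gr_refl by metis
  qed
  then have "cost P d (s(u := ?E)) u \<noteq> \<infinity>" by (simp add: cost_def)
  moreover have "cost P d (s(u := S)) u \<le> cost P d (s(u := ?E)) u"
    using assms(1) by (simp add: best_response_def)
  ultimately have "cost P d (s(u := S)) u \<noteq> \<infinity>" by (metis enat_ord_simps(5) top.not_eq_extremum)
  then show ?thesis by (simp add: cost_def split: if_splits)
qed

lemma step_mono:
  assumes "br_step P d s s'" "profile P s" "is_metric_on P d" "gr P d s v w"
  shows "gr P d s' v w"
proof -
  obtain u S where u: "u \<in> P" "best_response P d s u S" "s' = s(u := S)"
    using assms(1) by (auto simp: br_step_def)
  have gc: "greedy_connected P d s' u" using br_connected[OF u(2,1) assms(3)] u(3) by simp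
  show ?thesis using assms(4)
  proof (induction rule: gr.induct)
    case (gr_refl w)
    show ?case by (rule gr.intros(1))
  next
    case (gr_step v x w)
    show ?case
    proof (cases "v = u")
      case True
      show ?thesis
      proof (cases "w = u")
        case True
        then show ?thesis using \<open>v = u\<close> gr.gr_refl by metis
      next
        case False
        have "x \<in> P" using ne_tgt[OF assms(2) gr_step(1)] .
        then have "w \<in> P" using gr_in_P[OF gr_step(3) assms(2)] by simp
        then show ?thesis using gc False True unfolding gc_gr by blast
      qed
    next
      case False
      have "v \<in> P \<and> (v,x) \<in> s v" using ne_src[OF assms(2) gr_step(1)] .
      then have "(v,x) \<in> network_edges P s'" using False u(3) ne_in by fastforce
      then show ?thesis using gr_step gr.gr_step by metis
    qed
  qed
qed

theorem mainTheorem7: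
  fixes P :: "'a set" and d :: "'a \<Rightarrow> 'a \<Rightarrow> real"
  assumes "finite P" and "card P \<ge> 2" and "is_metric_on P d"
  shows "\<not> (\<exists>ss. br_cycle P d ss)"
proof
  assume "\<exists>ss. br_cycle P d ss"
  then obtain ss where c: "br_cycle P d ss" by blast
  define n where "n = length ss"
  have n2: "n \<ge> 2" using c by (simp add: br_cycle_def n_def)
  have prof: "\<And>i. i < n \<Longrightarrow> profile P (ss ! i)" using c
    by (auto simp: br_cycle_def br_path_def n_def)
  have stp: "\<And>i. Suc i < n \<Longrightarrow> br_step P d (ss ! i) (ss ! Suc i)" using c
    by (auto simp: br_cycle_def br_path_def n_def)
  have ne: "ss \<noteq> []" using n2 n_def by auto
  have ends: "ss ! 0 = ss ! (n - 1)" using c ne unfolding br_cycle_def n_def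
    by (metis hd_conv_nth last_conv_nth)
  have mono: "gr P d (ss ! i) v w \<Longrightarrow> gr P d (ss ! j) v w" if "i \<le> j" "j < n" for i j v w
    using that
  proof (induction j rule: dec_induct)
    case base
    then show ?case by simp
  next
    case (step k)
    then show ?case using step_mono[OF stp prof assms(3)] by simp
  qed
  have greq: "gr P d (ss ! i) = gr P d (ss ! 0)" if "i < n" for i
  proof (intro ext iffI)
    fix v w
    show "gr P d (ss ! 0) v w \<Longrightarrow> gr P d (ss ! i) v w" using mono[of 0 i] that by simp
    assume "gr P d (ss ! i) v w"
    then have "gr P d (ss ! (n - 1)) v w" using mono[of i "n - 1"] that n2 by simp
    then show "gr P d (ss ! 0) v w" using ends by simp
  qed
  obtain u S where u: "u \<in> P" "\<not> best_response P d (ss ! 0) u ((ss ! 0) u)"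
    "best_response P d (ss ! 0) u S" "ss ! 1 = (ss ! 0)(u := S)"
    using stp[of 0] n2 by (auto simp: br_step_def)
  have inv: "best_response P d (ss ! 0) u ((ss ! j) u)" if "1 \<le> j" "j < n" for j
    using that
  proof (induction j rule: dec_induct)
    case base
    then show ?case using u by simp
  next
    case (step k)
    obtain u' S' where u': "u' \<in> P" "best_response P d (ss ! k) u' S'" "ss ! Suc k = (ss ! k)(u' := S')"
      using stp[of k] step by (auto simp: br_step_def)
    show ?case
    proof (cases "u' = u")
      case True
      have "best_response P d (ss ! 0) u S'"
        using u'(2) True br_eq[OF prof[of k] prof[of 0] u(1) greq[of k]] step n2 by simp
      then show ?thesis using u' True by simp
    next
      case False
      then show ?thesis using u' step by simp
    qed
  qed
  have "best_response P d (ss ! 0) u ((ss ! (n - 1)) u)" using inv[of "n - 1"] n2 by simp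
  then show False using u(2) ends by simp
qed

end
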